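(* For any $\nu\ge1$ and $\delta>0$ there is a constant $C'(\nu,\delta)\ge1$ such that for all $x,y\ge0$ $$\binom{[x]+[y]}{[x]}^{\nu}B(\nu x+\delta,\nu y+\delta)\le\frac{C'(\nu,\delta)}{\big(\min(x+1,y+1)\big)^{(\nu+1)/2}}.$$
   Context: $[x]$ denotes the integer part of $x$. $B(x,y)=\int_0^1(1-t)^{x-1}t^{y-1}\,dt$ ($x,y>0$) is Euler's Beta function. *)

theory Defs
  imports "HOL-Analysis.Analysis"
begin

end

theory Submission
  imports Defs
begin


lemma beta_nat: "Beta (real m + 1) (real n + 1) = fact m * fact n / fact (m + n + 1)"
proof -
  have "Gamma (real k + 1) = fact k" for k
    using Gamma_fact[of k, where 'a=real] by (simp add: add.commute)
  from this[of m] this[of n] this[of "m+n+1"] show ?thesis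
    by (simp add: Beta_def add_ac)
qed

lemma int_p: "real ((m + n) choose m) * Beta (real m + 1) (real n + 1) = 1 / (real m + real n + 1)"
proof -
  have "real ((m + n) choose m) = fact (m+n) / (fact m * fact n)"
    by (simp add: binomial_fact)
  hence "real ((m + n) choose m) * Beta (real m + 1) (real n + 1)
      = fact (m+n) / (fact m * fact n) * (fact m * fact n / fact (m + n + 1))"
    by (simp add: beta_nat)
  also have "\<dots> = fact (m+n) / fact (m+n+1)" by simp
  also have "(fact (m + n + 1)::real) = (real m + real n + 1) * fact (m+n)"
    by (simp add: add.commute)
  also have "fact (m+n) / ((real m + real n + 1) * fact (m+n)) = 1 / (real m + real n + 1)"
    by simp
  finally show ?thesis .
qed

lemma int_q: assumes "m \<ge> 1" "n \<ge> 1"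
  shows "real ((m + n) choose m) * Beta (real m) (real n) = (real m + real n) / (real m * real n)"
proof -
  obtain a b where ab: "m = Suc a" "n = Suc b" using assms by (metis Suc_le_D One_nat_def)
  have 1: "Beta (real m) (real n) = fact a * fact b / fact (a + b + 1)"
    using beta_nat[of a b] by (simp add: ab add.commute)
  have 2: "real ((m + n) choose m) = fact (m+n) / (fact m * fact n)"
    by (simp add: binomial_fact)
  have 3: "(fact (m+n)::real) = (real m + real n) * fact (a+b+1)"
    by (simp add: ab fact_Suc add_ac)
  have 4: "(fact m::real) = real m * fact a" "(fact n::real) = real n * fact b"
    by (simp_all add: ab)
  have 5: "(fact (a+b+1)::real) > 0" "(fact a::real) > 0" "(fact b::real) > 0" by simp_all
  show ?thesis unfolding 1 2 3 4 using assms 5 by (simp add: field_simps del: fact_Suc)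
qed



lemma ln_pp: "(A::real) > 0 \<Longrightarrow> B > 0 \<Longrightarrow> ln (A ^ m * B ^ n) = real m * ln A + real n * ln B"
  by (simp add: ln_mult ln_realpow)

lemma pmax:
  fixes t :: real
  assumes "m \<ge> 1" "n \<ge> 1" "0 < t" "t < 1"
  defines "t0 \<equiv> real m / (real m + real n)"
  shows "t ^ m * (1 - t) ^ n \<le> t0 ^ m * (1 - t0) ^ n"
proof -
  have m: "real m > 0" and n: "real n > 0" using assms by auto
  have t0: "0 < t0" "t0 < 1" using m n by (auto simp: t0_def)
  have 1: "1 - t0 = real n / (real m + real n)" using m n by (simp add: t0_def field_simps)
  have "ln (t / t0) \<le> t / t0 - 1" using assms t0 by (intro ln_le_minus_one) auto
  hence a: "real m * ln (t / t0) \<le> real m * (t / t0 - 1)" using m by (intro mult_left_mono) auto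
  have "ln ((1-t) / (1-t0)) \<le> (1-t) / (1-t0) - 1" using assms t0 by (intro ln_le_minus_one) auto
  hence b: "real n * ln ((1-t) / (1-t0)) \<le> real n * ((1-t) / (1-t0) - 1)" using n by (intro mult_left_mono) auto
  have c: "real m * (t / t0 - 1) + real n * ((1-t) / (1-t0) - 1) = 0"
    unfolding 1 using m n by (simp add: t0_def field_simps)
  have "ln (t ^ m * (1 - t) ^ n) = real m * ln t + real n * ln (1 - t)"
    using assms by (simp add: ln_mult ln_realpow)
  moreover have "ln (t0 ^ m * (1 - t0) ^ n) = real m * ln t0 + real n * ln (1 - t0)"
    using t0 by (simp add: ln_mult ln_realpow)
  moreover have d1: "ln (t / t0) = ln t - ln t0" using assms(3) t0 by (intro ln_divide_pos)
  moreover have d2: "ln ((1-t) / (1-t0)) = ln (1-t) - ln (1-t0)" using assms(4) t0 by (intro ln_divide_pos) auto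
  moreover have "real m * ln (t / t0) = real m * ln t - real m * ln t0" unfolding d1 by (simp add: right_diff_distrib)
  moreover have "real n * ln ((1-t) / (1-t0)) = real n * ln (1-t) - real n * ln (1-t0)" unfolding d2 by (simp add: right_diff_distrib)
  ultimately have "ln (t ^ m * (1 - t) ^ n) \<le> ln (t0 ^ m * (1 - t0) ^ n)"
    using a b c by linarith
  thus ?thesis using assms t0 by simp
qed

lemma plow:
  fixes h :: real
  assumes "m \<ge> 1" "n \<ge> 2" "0 \<le> h" "h^2 \<le> real m * real n / (2 * (real m + real n)^3)"
  defines "t0 \<equiv> real m / (real m + real n)"
  shows "exp (-1) * (t0 ^ m * (1 - t0) ^ n) \<le> (t0 + h) ^ m * (1 - (t0 + h)) ^ n"
proof -
  define N where "N = real m + real n"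
  have m: "real m \<ge> 1" and n: "real n \<ge> 2" using assms by auto
  have N: "N > 0" "N \<ge> real m" "N \<ge> real n" using m n by (auto simp: N_def)
  have t0: "0 < t0" "t0 < 1" using m n by (auto simp: t0_def)
  have 1: "1 - t0 = real n / N" using m n by (simp add: t0_def N_def field_simps)
  define u where "u = h * N / real m"
  define x where "x = h * N / real n"
  have hb: "h^2 \<le> real m * real n / (2 * N^3)" using assms(4) by (simp add: N_def)
  have u0: "u \<ge> 0" "x \<ge> 0" using assms N m n by (auto simp: u_def x_def)
  have "u^2 = h^2 * N^2 / real m ^ 2" by (simp add: u_def power_divide power_mult_distrib)
  also have "\<dots> \<le> (real m * real n / (2 * N^3)) * N^2 / real m ^ 2"
    using hb m by (intro divide_right_mono mult_right_mono) auto
  also have "\<dots> = real n / (2 * N * real m)" using m N by (simp add: field_simps power2_eq_square power3_eq_cube)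
  also have "\<dots> \<le> 1"
  proof -
    have "N * 1 \<le> N * real m" using N m by (intro mult_left_mono) auto
    hence "real n \<le> N * (real m * 2)" using N by linarith
    thus ?thesis using m n N by (simp add: field_simps)
  qed
  finally have u1: "u \<le> 1" using u0 by (simp add: power_le_one_iff abs_le_square_iff)
  have "x^2 = h^2 * N^2 / real n ^ 2" by (simp add: x_def power_divide power_mult_distrib)
  also have "\<dots> \<le> (real m * real n / (2 * N^3)) * N^2 / real n ^ 2"
    using hb n by (intro divide_right_mono mult_right_mono) auto
  also have "\<dots> = real m / (2 * N * real n)" using n N by (simp add: field_simps power2_eq_square power3_eq_cube)
  also have "\<dots> \<le> (1/2)^2"
  proof -
    have "N * 2 \<le> N * real n" using N n by (intro mult_left_mono) auto
    hence "2 * real m \<le> N * real n" using N by linarith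
    thus ?thesis using m n N by (simp add: field_simps power2_eq_square)
  qed
  finally have x1: "x \<le> 1/2" using u0 power2_le_imp_le by fastforce
  have la: "u - u^2 \<le> ln (1 + u)" using u0(1) u1 by (rule ln_one_plus_pos_lower_bound)
  have lb: "- x - 2 * x^2 \<le> ln (1 - x)" using u0(2) x1 by (rule ln_one_minus_pos_lower_bound)
  have t0N: "t0 = real m / N" by (simp add: t0_def N_def)
  have "t0 * u = h" unfolding t0N u_def using m N by (simp add: field_simps)
  hence e1: "t0 + h = t0 * (1 + u)" by (simp add: algebra_simps)
  have "(1 - t0) * x = h" unfolding 1 x_def using n N by (simp add: field_simps)
  hence e2: "1 - (t0 + h) = (1 - t0) * (1 - x)" by (simp add: algebra_simps)
  have ux: "real m * u = h * N" "real n * x = h * N" using m n by (simp_all add: u_def x_def)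
  have q: "real m * u^2 + 2 * real n * x^2 \<le> 1"
  proof -
    have "real m * u^2 + 2 * real n * x^2 = h^2 * N^2 * (1 / real m + 2 / real n)"
      using m n by (simp add: u_def x_def field_simps power2_eq_square)
    also have "\<dots> \<le> h^2 * N^2 * (2 * N / (real m * real n))"
      using m n N by (intro mult_left_mono) (auto simp: field_simps N_def)
    also have "\<dots> \<le> (real m * real n / (2 * N^3)) * N^2 * (2 * N / (real m * real n))"
      using hb m n N by (intro mult_right_mono) auto
    also have "\<dots> = 1" using m n N by (simp add: field_simps power2_eq_square power3_eq_cube)
    finally show ?thesis .
  qed
  have x1': "x < 1" using x1 by simp
  have "ln (t0 ^ m * (1 - t0) ^ n) - 1 \<le> ln ((t0 + h) ^ m * (1 - (t0 + h)) ^ n)"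
  proof -
    have "ln ((t0 + h) ^ m * (1 - (t0 + h)) ^ n) = real m * ln t0 + real m * ln (1+u) + real n * ln (1-t0) + real n * ln (1 - x)"
    proof -
      have p1: "0 < t0 * (1+u)" "0 < (1 - t0) * (1 - x)" using t0 u0 x1' by auto
      have q1: "0 < t0 + h" "0 < 1 - (t0 + h)" using p1 e1 e2 by linarith+
      have "ln ((t0 + h) ^ m * (1 - (t0 + h)) ^ n) = real m * ln (t0 + h) + real n * ln (1 - (t0 + h))"
        using ln_pp[OF q1] .
      also have "ln (t0 + h) = ln t0 + ln (1+u)" using t0 u0 e1 ln_mult[of t0 "1+u"] by simp
      also have "ln (1 - (t0 + h)) = ln (1 - t0) + ln (1-x)" using t0 x1' e2 ln_mult[of "1-t0" "1-x"] by simp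
      finally show ?thesis by (simp add: algebra_simps)
    qed
    moreover have "ln (t0 ^ m * (1 - t0) ^ n) = real m * ln t0 + real n * ln (1 - t0)"
      using t0 by (simp add: ln_mult ln_realpow)
    moreover have "real m * (u - u^2) \<le> real m * ln (1+u)" using la m by (intro mult_left_mono) auto
    moreover have "real n * (- x - 2 * x^2) \<le> real n * ln (1-x)" using lb n by (intro mult_left_mono) auto
    ultimately show ?thesis using q ux by (simp add: algebra_simps)
  qed
  moreover have "0 < t0 + h" "0 < 1 - (t0 + h)" using t0 u0 x1' e1 e2
    by (metis add_pos_nonneg mult_pos_pos zero_less_one, metis diff_gt_0_iff_gt mult_pos_pos)
  hence "0 < (t0 + h) ^ m * (1 - (t0 + h)) ^ n" by simp
  ultimately have "exp (ln (t0 ^ m * (1 - t0) ^ n) - 1) \<le> (t0 + h) ^ m * (1 - (t0 + h)) ^ n"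
    by (subst (asm) ln_ge_iff) auto
  thus ?thesis using t0 by (simp add: exp_diff exp_minus field_simps)
qed



lemma beta_ioo:
  assumes "a > 0" "b > (0::real)"
  shows "((\<lambda>t. t powr (a - 1) * (1 - t) powr (b - 1)) has_integral Beta a b) {0<..<1}"
  using has_integral_Beta_real[OF assms] by (simp add: has_integral_Icc_iff_Ioo)

lemma int_poly:
  "((\<lambda>t. real ((m + n) choose m) * (t ^ m * (1 - t) ^ n)) has_integral 1 / (real m + real n + 1)) {0<..<1}"
proof -
  have "((\<lambda>t. t powr (real m + 1 - 1) * (1 - t) powr (real n + 1 - 1)) has_integral Beta (real m + 1) (real n + 1)) {0<..<1}"
    by (rule beta_ioo) auto
  hence "((\<lambda>t. t ^ m * (1 - t) ^ n) has_integral Beta (real m + 1) (real n + 1)) {0<..<1}"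
    by (rule has_integral_eq[rotated]) (auto simp: powr_realpow)
  from has_integral_mult_right[OF this, of "real ((m + n) choose m)"] show ?thesis
    by (simp add: int_p)
qed

lemma Pbound:
  assumes "m \<ge> 1" "n \<ge> 2"
  defines "t0 \<equiv> real m / (real m + real n)"
  defines "c \<equiv> real ((m + n) choose m)"
  shows "(c * (t0 ^ m * (1 - t0) ^ n))^2 \<le> 2 * exp 2 * (real m + real n) / (real m * real n)"
proof -
  define N where "N = real m + real n"
  define P where "P = c * (t0 ^ m * (1 - t0) ^ n)"
  define w where "w = sqrt (real m * real n / (2 * N^3))"
  have m: "real m \<ge> 1" and n: "real n \<ge> 2" using assms by auto
  have N: "N > 0" "N \<ge> real m" "N \<ge> real n" using m n by (auto simp: N_def)
  have t0: "0 < t0" "t0 < 1" using m n by (auto simp: t0_def)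
  have 1: "1 - t0 = real n / N" using m n by (simp add: t0_def N_def field_simps)
  have c: "c > 0" unfolding c_def by simp
  have P: "P > 0" using c t0 by (simp add: P_def)
  have w0: "w > 0" using m n N by (simp add: w_def)
  have w2: "w^2 = real m * real n / (2 * N^3)" using m n N by (simp add: w_def)
  have wle: "w < 1 - t0"
  proof -
    have "N * 2 \<le> N * real n" using N n by (intro mult_left_mono) auto
    hence "2 * real m \<le> N * real n" using N by linarith
    hence d: "0 \<le> real n * (N * real n - 2 * real m) / (4 * N^3)" using n N by simp
    have "(real n / (2*N))^2 - real m * real n / (2 * N^3) = real n * (N * real n - 2 * real m) / (4 * N^3)"
      using N by (simp add: field_simps power2_eq_square power3_eq_cube)
    hence "w^2 \<le> (real n / (2*N))^2" unfolding w2 using d by linarith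
    moreover have "0 \<le> real n / (2*N)" using N by simp
    ultimately have "w \<le> real n / (2*N)" by (rule power2_le_imp_le)
    also have "\<dots> < real n / N" using n N by (intro divide_strict_left_mono) auto
    also have "\<dots> = 1 - t0" using 1 by simp
    finally show ?thesis .
  qed
  have sub: "{t0..t0+w} \<subseteq> {0<..<1}" using t0 wle by auto
  have cont: "continuous_on {t0..t0+w} (\<lambda>t. c * (t ^ m * (1 - t) ^ n))"
    by (intro continuous_intros)
  have i1: "(\<lambda>t. c * (t ^ m * (1 - t) ^ n)) integrable_on {t0..t0+w}"
    using cont by (rule integrable_continuous_interval)
  have ip: "((\<lambda>t. c * (t ^ m * (1 - t) ^ n)) has_integral 1 / (N + 1)) {0<..<1}"
    using int_poly[of m n] by (simp add: c_def N_def)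
  have "integral {t0..t0+w} (\<lambda>t. c * (t ^ m * (1 - t) ^ n)) \<le> integral {0<..<1} (\<lambda>t. c * (t ^ m * (1 - t) ^ n))"
    using sub i1 ip c by (intro integral_subset_le) (auto simp: has_integral_integrable intro!: mult_nonneg_nonneg)
  also have "\<dots> = 1 / (N + 1)" using ip by (rule integral_unique)
  finally have I1: "integral {t0..t0+w} (\<lambda>t. c * (t ^ m * (1 - t) ^ n)) \<le> 1 / (N + 1)" .
  have "integral {t0..t0+w} (\<lambda>t. exp (-1) * P) \<le> integral {t0..t0+w} (\<lambda>t. c * (t ^ m * (1 - t) ^ n))"
  proof (rule integral_le)
    fix t assume "t \<in> {t0..t0+w}"
    then obtain h where h: "t = t0 + h" "0 \<le> h" "h \<le> w" by (metis atLeastAtMost_iff le_add_diff_inverse add_le_cancel_left diff_ge_0_iff_ge)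
    have "h^2 \<le> w^2" using h w0 by (intro power_mono) auto
    hence "exp (-1) * (t0 ^ m * (1 - t0) ^ n) \<le> (t0 + h) ^ m * (1 - (t0 + h)) ^ n"
      unfolding t0_def using plow[OF assms(1,2) h(2)] w2 by (simp add: N_def)
    thus "exp (-1) * P \<le> c * (t ^ m * (1 - t) ^ n)" using c unfolding P_def h(1)
      by (metis mult.left_commute mult_left_mono less_imp_le)
  qed (auto simp: i1)
  also have "integral {t0..t0+w} (\<lambda>t. exp (-1) * P) = w * exp (-1) * P" using w0 by simp
  finally have "w * exp (-1) * P \<le> 1 / (N + 1)" using I1 by linarith
  hence "(w * exp (-1) * P) * (N + 1) \<le> 1" using N by (simp add: field_simps)
  hence "exp 1 * ((w * exp (-1) * P) * (N + 1)) \<le> exp 1" by simp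
  moreover have "exp 1 * ((w * exp (-1) * P) * (N + 1)) = P * (w * (N + 1))"
    by (simp add: exp_minus field_simps)
  ultimately have "P * (w * (N + 1)) \<le> exp 1" by simp
  hence "P \<le> exp 1 / (w * (N + 1))" using w0 N by (simp add: pos_le_divide_eq)
  hence "P^2 \<le> (exp 1 / (w * (N + 1)))^2" using P by (intro power_mono) auto
  also have "\<dots> = exp 2 / (w^2 * (N+1)^2)" by (simp add: power_divide power_mult_distrib flip: exp_of_nat_mult)
  also have "\<dots> = exp 2 * 2 * N^3 / (real m * real n * (N+1)^2)" unfolding w2 using m n N by (simp add: field_simps)
  also have "\<dots> \<le> exp 2 * 2 * N^3 / (real m * real n * N^2)"
    using m n N by (intro divide_left_mono mult_left_mono power_mono) auto
  also have "\<dots> = 2 * exp 2 * N / (real m * real n)" using N by (simp add: field_simps power2_eq_square power3_eq_cube)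
  finally show ?thesis by (simp add: P_def N_def)
qed



lemma ln_F:
  fixes t c \<nu> a b :: real
  assumes "0 < t" "t < 1" "c > 0"
  shows "ln (c powr \<nu> * (t powr (a-1) * (1-t) powr (b-1))) = \<nu> * ln c + (a-1) * ln t + (b-1) * ln (1-t)"
  using assms by (simp add: ln_mult)

lemma ln_p:
  fixes t c :: real
  assumes "0 < t" "t < 1" "c > 0"
  shows "ln (c * (t ^ m * (1-t) ^ n)) = ln c + real m * ln t + real n * ln (1-t)"
  using assms by (simp add: ln_mult ln_realpow)

lemma ptw_large:
  fixes t \<nu> a b c P :: real
  assumes "0 < t" "t < 1" "c > 0" "\<nu> \<ge> 1" "c * (t ^ m * (1-t) ^ n) \<le> P"
    "a \<ge> \<nu> * real m" "b \<ge> \<nu> * real n"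
  shows "c powr \<nu> * (t powr (a-1) * (1-t) powr (b-1))
     \<le> P powr (\<nu> - 1) * (c * (t powr (real m - 1) * (1-t) powr (real n - 1)))"
proof -
  have p0: "c * (t ^ m * (1-t) ^ n) > 0" using assms by simp
  hence P0: "P > 0" using assms by linarith
  define lt where "lt = ln t"
  define l1 where "l1 = ln (1-t)"
  define lc where "lc = ln c"
  define lP where "lP = ln P"
  have lt: "lt < 0" "l1 < 0" using assms by (simp_all add: lt_def l1_def)
  have "ln (c * (t ^ m * (1-t) ^ n)) \<le> lP" unfolding lP_def using p0 assms(5) by simp
  hence h: "lc + real m * lt + real n * l1 \<le> lP" using ln_p[OF assms(1-3)] by (simp add: lc_def lt_def l1_def)
  have L: "ln (c powr \<nu> * (t powr (a-1) * (1-t) powr (b-1))) = \<nu> * lc + (a-1) * lt + (b-1) * l1"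
    using ln_F[OF assms(1-3)] by (simp add: lc_def lt_def l1_def)
  have R: "ln (P powr (\<nu> - 1) * (c * (t powr (real m - 1) * (1-t) powr (real n - 1))))
       = (\<nu> - 1) * lP + lc + (real m - 1) * lt + (real n - 1) * l1"
    using assms P0 by (simp add: ln_mult lc_def lt_def l1_def lP_def)
  have f1: "(\<nu> - 1) * (lP - (lc + real m * lt + real n * l1)) \<ge> 0"
    using h assms(4) by (intro mult_nonneg_nonneg) auto
  have f2: "(a - \<nu> * real m) * lt \<le> 0" using lt assms(6) by (intro mult_nonneg_nonpos) auto
  have f3: "(b - \<nu> * real n) * l1 \<le> 0" using lt assms(7) by (intro mult_nonneg_nonpos) auto
  have "ln (c powr \<nu> * (t powr (a-1) * (1-t) powr (b-1)))
     \<le> ln (P powr (\<nu> - 1) * (c * (t powr (real m - 1) * (1-t) powr (real n - 1))))"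
    unfolding L R using f1 f2 f3 by (simp add: algebra_simps)
  thus ?thesis using assms P0 by simp
qed

lemma ptw_small:
  fixes t \<nu> a b c \<delta> :: real
  assumes "0 < t" "t < 1" "c > 0" "\<nu> \<ge> 1" "c * (t ^ m * (1-t) ^ n) \<le> 1"
    "a \<ge> \<nu> * real m + \<delta>" "b \<ge> \<nu> * real n + \<delta>"
  shows "c powr \<nu> * (t powr (a-1) * (1-t) powr (b-1)) \<le> t powr (\<delta> - 1) * (1-t) powr (\<delta> - 1)"
proof -
  have p0: "c * (t ^ m * (1-t) ^ n) > 0" using assms by simp
  define lt where "lt = ln t"
  define l1 where "l1 = ln (1-t)"
  define lc where "lc = ln c"
  have lt: "lt < 0" "l1 < 0" using assms by (simp_all add: lt_def l1_def)
  have "ln (c * (t ^ m * (1-t) ^ n)) \<le> 0" using p0 assms(5) by simp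
  hence h: "lc + real m * lt + real n * l1 \<le> 0" using ln_p[OF assms(1-3)] by (simp add: lc_def lt_def l1_def)
  have L: "ln (c powr \<nu> * (t powr (a-1) * (1-t) powr (b-1))) = \<nu> * lc + (a-1) * lt + (b-1) * l1"
    using ln_F[OF assms(1-3)] by (simp add: lc_def lt_def l1_def)
  have R: "ln (t powr (\<delta> - 1) * (1-t) powr (\<delta> - 1)) = (\<delta> - 1) * lt + (\<delta> - 1) * l1"
    using assms by (simp add: ln_mult lt_def l1_def)
  have f1: "\<nu> * (lc + real m * lt + real n * l1) \<le> 0"
    using h assms(4) by (intro mult_nonneg_nonpos) auto
  have f2: "(a - \<nu> * real m - \<delta>) * lt \<le> 0" using lt assms(6) by (intro mult_nonneg_nonpos) auto
  have f3: "(b - \<nu> * real n - \<delta>) * l1 \<le> 0" using lt assms(7) by (intro mult_nonneg_nonpos) auto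
  have "ln (c powr \<nu> * (t powr (a-1) * (1-t) powr (b-1))) \<le> ln (t powr (\<delta> - 1) * (1-t) powr (\<delta> - 1))"
    unfolding L R using f1 f2 f3 by (simp add: algebra_simps)
  thus ?thesis using assms by simp
qed

lemma p_le1:
  fixes t :: real
  assumes "0 \<le> t" "t \<le> 1"
  shows "real ((m + n) choose m) * (t ^ m * (1-t) ^ n) \<le> 1"
proof -
  have "(t + (1 - t)) ^ (m+n) = (\<Sum>k\<le>m+n. real ((m+n) choose k) * t ^ k * (1-t) ^ (m + n - k))"
    by (rule binomial_ring)
  hence "1 = (\<Sum>k\<le>m+n. real ((m+n) choose k) * t ^ k * (1-t) ^ (m + n - k))" by simp
  moreover have "real ((m+n) choose m) * t ^ m * (1-t) ^ (m + n - m) \<le> (\<Sum>k\<le>m+n. real ((m+n) choose k) * t ^ k * (1-t) ^ (m + n - k))"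
    by (rule member_le_sum[where f="\<lambda>k. real ((m+n) choose k) * t ^ k * (1-t) ^ (m + n - k)"]) (use assms in auto)
  ultimately show ?thesis by (simp add: mult.assoc)
qed



lemma final_large:
  fixes P k M Q \<nu> :: real
  assumes "P > 0" "P^2 \<le> 4 * exp 2 / k" "Q \<le> 2 / k" "Q \<ge> 0" "k > 0" "M > 0" "M \<le> 2 * k" "\<nu> \<ge> 1"
  shows "P powr (\<nu> - 1) * Q \<le> 2 * (4 * exp 2) powr ((\<nu> - 1) / 2) * 2 powr ((\<nu> + 1) / 2) / M powr ((\<nu> + 1) / 2)"
proof -
  define e1 where "e1 = (\<nu> - 1) / 2"
  define e2 where "e2 = (\<nu> + 1) / 2"
  have e10: "e1 \<ge> 0" using assms(8) unfolding e1_def by auto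
  have e12: "e2 = e1 + 1" unfolding e1_def e2_def by (simp add: field_simps)
  have e20: "e2 > 0" using assms(8) unfolding e2_def by auto
  have "P^2 = P powr 2" using assms(1) by (simp add: powr_numeral)
  hence "(P^2) powr e1 = P powr (2 * e1)" by (simp add: powr_powr)
  also have "2 * e1 = \<nu> - 1" by (simp add: e1_def)
  finally have a0: "P powr (\<nu> - 1) = (P^2) powr e1" by simp
  have "(P^2) powr e1 \<le> (4 * exp 2 / k) powr e1" using assms e10 by (intro powr_mono2) auto
  also have "\<dots> = (4 * exp 2) powr e1 / k powr e1" using assms by (simp add: powr_divide)
  finally have a: "P powr (\<nu> - 1) \<le> (4 * exp 2) powr e1 / k powr e1" using a0 by simp
  have "P powr (\<nu> - 1) * Q \<le> (4 * exp 2) powr e1 / k powr e1 * (2 / k)"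
    using a assms by (intro mult_mono) auto
  also have "k powr e2 = k powr e1 * k" unfolding e12 using assms(5) by (simp add: powr_add)
  hence "(4 * exp 2) powr e1 / k powr e1 * (2 / k) = 2 * (4 * exp 2) powr e1 / k powr e2"
    by simp
  also have "2 * (4 * exp 2) powr e1 / k powr e2 \<le> 2 * (4 * exp 2) powr e1 / (M / 2) powr e2"
    using assms e20 by (intro divide_left_mono powr_mono2 mult_pos_pos) auto
  also have "\<dots> = 2 * (4 * exp 2) powr e1 * 2 powr e2 / M powr e2"
    using assms by (simp add: powr_divide)
  finally show ?thesis by (simp add: e1_def e2_def)
qed



theorem lemma7p1:
  fixes \<nu> \<delta> :: real
  assumes "\<nu> \<ge> 1" and "\<delta> > 0"
  shows "\<exists>C::real. C \<ge> 1 \<and> (\<forall>x y :: real. x \<ge> 0 \<longrightarrow> y \<ge> 0 \<longrightarrow>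
    real ((nat \<lfloor>x\<rfloor> + nat \<lfloor>y\<rfloor>) choose (nat \<lfloor>x\<rfloor>)) powr \<nu>
      * Beta (\<nu> * x + \<delta>) (\<nu> * y + \<delta>)
    \<le> C / (min (x + 1) (y + 1)) powr ((\<nu> + 1) / 2))"
proof -
  define e2 where "e2 = (\<nu> + 1) / 2"
  define C1 where "C1 = 2 * (4 * exp 2) powr ((\<nu> - 1) / 2) * 2 powr e2"
  define C2 where "C2 = Beta \<delta> \<delta> * 3 powr e2"
  define C where "C = max 1 (max C1 C2)"
  have e20: "e2 > 0" using assms unfolding e2_def by auto
  show ?thesis
  proof (intro exI[of _ C] conjI allI impI)
    show "1 \<le> C" by (simp add: C_def)
  next
    fix x y :: real assume x0: "0 \<le> x" and y0: "0 \<le> y"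
    define m where "m = nat \<lfloor>x\<rfloor>"
    define n where "n = nat \<lfloor>y\<rfloor>"
    define c where "c = real ((m + n) choose m)"
    define a where "a = \<nu> * x + \<delta>"
    define b where "b = \<nu> * y + \<delta>"
    define M where "M = min (x + 1) (y + 1)"
    have M0: "M > 0" using x0 y0 by (simp add: M_def)
    have c0: "c > 0" by (simp add: c_def)
    have mx: "real m \<le> x" "x < real m + 1" using x0 unfolding m_def by linarith+
    have ny: "real n \<le> y" "y < real n + 1" using y0 unfolding n_def by linarith+
    have am: "a \<ge> \<nu> * real m + \<delta>" unfolding a_def using mx assms by (simp add: mult_left_mono)
    have bn: "b \<ge> \<nu> * real n + \<delta>" unfolding b_def using ny assms by (simp add: mult_left_mono)
    have "\<nu> * x \<ge> 0" "\<nu> * y \<ge> 0" using x0 y0 assms by simp_all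
    hence ab0: "a > 0" "b > 0" using assms by (simp_all add: a_def b_def)
    have LI: "((\<lambda>t. c powr \<nu> * (t powr (a-1) * (1-t) powr (b-1))) has_integral c powr \<nu> * Beta a b) {0<..<1}"
      using beta_ioo[OF ab0] by (rule has_integral_mult_right)
    have main: "c powr \<nu> * Beta a b \<le> C / M powr e2"
    proof (cases "m \<ge> 2 \<and> n \<ge> 2")
      case True
      hence m2: "m \<ge> 2" and n2: "n \<ge> 2" by auto
      define t0 where "t0 = real m / (real m + real n)"
      define P where "P = c * (t0 ^ m * (1 - t0) ^ n)"
      have P0: "P > 0" using c0 m2 n2 by (simp add: P_def t0_def)
      have pP: "c * (t ^ m * (1-t) ^ n) \<le> P" if "0 < t" "t < 1" for t
        unfolding P_def t0_def using pmax[of m n t] m2 n2 that c0 by (intro mult_left_mono) auto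
      have RI: "((\<lambda>t. P powr (\<nu> - 1) * (c * (t powr (real m - 1) * (1-t) powr (real n - 1))))
          has_integral P powr (\<nu> - 1) * (c * Beta (real m) (real n))) {0<..<1}"
        using m2 n2 by (intro has_integral_mult_right beta_ioo) auto
      have "c powr \<nu> * Beta a b \<le> P powr (\<nu> - 1) * (c * Beta (real m) (real n))"
        using LI RI
      proof (rule has_integral_le)
        fix t :: real assume "t \<in> {0<..<1}"
        hence t: "0 < t" "t < 1" by auto
        show "c powr \<nu> * (t powr (a-1) * (1-t) powr (b-1))
            \<le> P powr (\<nu> - 1) * (c * (t powr (real m - 1) * (1-t) powr (real n - 1)))"
          using am bn assms(2) by (intro ptw_large[OF t c0 assms(1) pP[OF t]]) linarith+
      qed
      also have "c * Beta (real m) (real n) = (real m + real n) / (real m * real n)"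
        unfolding c_def using m2 n2 by (intro int_q) auto
      finally have L1: "c powr \<nu> * Beta a b \<le> P powr (\<nu> - 1) * ((real m + real n) / (real m * real n))" .
      define k where "k = min (real m) (real n)"
      have k2: "k \<ge> 2" using m2 n2 by (simp add: k_def)
      have Q: "(real m + real n) / (real m * real n) \<le> 2 / k"
      proof -
        have "(real m + real n) / (real m * real n) = 1 / real m + 1 / real n" using m2 n2 by (simp add: field_simps)
        also have "\<dots> \<le> 1 / k + 1 / k" using k2 by (intro add_mono divide_left_mono) (auto simp: k_def)
        finally show ?thesis by simp
      qed
      have P2: "P^2 \<le> 4 * exp 2 / k"
      proof -
        have "P^2 \<le> 2 * exp 2 * (real m + real n) / (real m * real n)"
          unfolding P_def t0_def c_def using Pbound[of m n] m2 n2 by simp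
        also have "\<dots> = 2 * exp 2 * ((real m + real n) / (real m * real n))" by simp
        also have "\<dots> \<le> 2 * exp 2 * (2 / k)" using Q by (intro mult_left_mono) auto
        finally show ?thesis by simp
      qed
      have Mk: "M \<le> 2 * k" using mx ny m2 n2 by (auto simp: M_def k_def)
      have "P powr (\<nu> - 1) * ((real m + real n) / (real m * real n)) \<le> C1 / M powr e2"
        unfolding C1_def e2_def
        by (rule final_large[OF P0 P2 Q _ _ M0 Mk assms(1)]) (use k2 in auto)
      also have "\<dots> \<le> C / M powr e2" using M0 by (intro divide_right_mono) (auto simp: C_def)
      finally show ?thesis using L1 by linarith
    next
      case False
      have RI: "((\<lambda>t. t powr (\<delta> - 1) * (1-t) powr (\<delta> - 1)) has_integral Beta \<delta> \<delta>) {0<..<1}"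
        using assms(2) by (intro beta_ioo) auto
      have B0: "Beta \<delta> \<delta> \<ge> 0"
        by (rule has_integral_nonneg[OF RI]) auto
      have "c powr \<nu> * Beta a b \<le> Beta \<delta> \<delta>"
        using LI RI
      proof (rule has_integral_le)
        fix t :: real assume "t \<in> {0<..<1}"
        hence t: "0 < t" "t < 1" by auto
        show "c powr \<nu> * (t powr (a-1) * (1-t) powr (b-1)) \<le> t powr (\<delta> - 1) * (1-t) powr (\<delta> - 1)"
          using ptw_small[OF t c0 assms(1) _ am bn] p_le1[of t m n] t unfolding c_def by auto
      qed
      have M3: "M \<le> 3" using False mx ny by (auto simp: M_def)
      have "Beta \<delta> \<delta> * M powr e2 \<le> Beta \<delta> \<delta> * 3 powr e2"
        using B0 M0 M3 e20 by (intro mult_left_mono powr_mono2) auto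
      hence "Beta \<delta> \<delta> \<le> C2 / M powr e2" using M0 by (simp add: C2_def pos_le_divide_eq)
      also have "\<dots> \<le> C / M powr e2" using M0 by (intro divide_right_mono) (auto simp: C_def)
      finally show ?thesis using \<open>c powr \<nu> * Beta a b \<le> Beta \<delta> \<delta>\<close> by linarith
    qed
    thus "real ((nat \<lfloor>x\<rfloor> + nat \<lfloor>y\<rfloor>) choose (nat \<lfloor>x\<rfloor>)) powr \<nu>
      * Beta (\<nu> * x + \<delta>) (\<nu> * y + \<delta>) \<le> C / (min (x + 1) (y + 1)) powr ((\<nu> + 1) / 2)"
      by (simp add: m_def n_def c_def a_def b_def M_def e2_def)
  qed
qed

end
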